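(* Assume the scores are produced by a symmetric transformation, the intervals $\mathcal{I}_1,\ldots,\mathcal{I}_L$ are fixed (data-independent), and $H_0$ holds ($Z_1,\ldots,Z_n$ i.i.d. with an arbitrary law). Then for every $\alpha\in(0,1)$ and every integer $B\ge1$, $\Pr\{p_{B,\mathrm{multi}}<\alpha\}=\alpha$.
   Context: Let $Z_1,\ldots,Z_n$ be independent random elements of a measurable space $\mathcal{Z}$, $\mathcal{D}=(Z_1,\ldots,Z_n)$. A measurable $\mathbb{S}:\mathcal{Z}\times\mathcal{Z}^n\to\mathbb{R}$ is a symmetric transformation if $\mathbb{S}(z;\mathcal{D})=\mathbb{S}(z;\mathcal{D}_\pi)$ for all $z$ and all permutations $\pi$ of $[n]$, where $\mathcal{D}_\pi=(Z_{\pi(1)},\ldots,Z_{\pi(n)})$. Scores: $S_i=\mathbb{S}(Z_i;\mathcal{D})+\epsilon e_i$ with fixed $\epsilon>0$ and $e_i$ i.i.d. $\mathcal{N}(0,1)$ independent of the data. Let $\mathcal{I}_1,\ldots,\mathcal{I}_L$ be nonempty subintervals of $\{1,\ldots,n\}$. Local ranks: $R_{i,\ell}=|\{j\in\mathcal{I}_\ell:S_j\le S_i\}|$ for $i\in\mathcal{I}_\ell$. The aggregation function $\mathbb{A}$ maps finite rank vectors to $[0,\infty)$; $T_{n,\ell}=\mathbb{A}((R_{i,\ell})_{i\in\mathcal{I}_\ell})$ (ranks in increasing order of $i$), and $T_{n,\mathrm{multi}}=\max_{\ell\in[L]}T_{n,\ell}$. For a permutation $\pi$ of $[n]$, $\mathbb{G}(\pi)_\ell=\mathbb{A}\big((|\{j\in\mathcal{I}_\ell:\pi(j)\le\pi(i)\}|)_{i\in\mathcal{I}_\ell}\big)$.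 Let $\pi_1,\ldots,\pi_B$ be i.i.d. uniform random permutations of $[n]$ and $U\sim\mathcal{U}(0,1)$, all mutually independent and independent of the data, and $p_{B,\mathrm{multi}}=\frac{\sum_{b=1}^B\mathbf{1}\{\|\mathbb{G}(\pi_b)\|_\infty>T_{n,\mathrm{multi}}\}+U\big[1+\sum_{b=1}^B\mathbf{1}\{\|\mathbb{G}(\pi_b)\|_\infty=T_{n,\mathrm{multi}}\}\big]}{B+1}.$ *)

theory Defs
  imports "HOL-Probability.Probability"
begin

definition score :: "('z \<Rightarrow> (nat \<Rightarrow> 'z) \<Rightarrow> real) \<Rightarrow> real \<Rightarrow> (nat \<Rightarrow> 'z) \<Rightarrow> (nat \<Rightarrow> real) \<Rightarrow> nat \<Rightarrow> real" where
  "score S \<epsilon> D e i = S (D i) D + \<epsilon> * e i"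

definition local_rank :: "(nat \<Rightarrow> 'a::linorder) \<Rightarrow> nat set \<Rightarrow> nat \<Rightarrow> nat" where
  "local_rank s J i = card {j \<in> J. s j \<le> s i}"

definition local_stat :: "(nat list \<Rightarrow> real) \<Rightarrow> (nat \<Rightarrow> 'a::linorder) \<Rightarrow> nat set \<Rightarrow> real" where
  "local_stat A s J = A (map (local_rank s J) (sorted_list_of_set J))"

definition T_multi :: "(nat list \<Rightarrow> real) \<Rightarrow> (nat \<Rightarrow> nat set) \<Rightarrow> nat \<Rightarrow> (nat \<Rightarrow> real) \<Rightarrow> real" where
  "T_multi A I L s = Max ((\<lambda>l. local_stat A s (I l)) ` {1..L})"

definition G :: "(nat list \<Rightarrow> real) \<Rightarrow> (nat \<Rightarrow> nat set) \<Rightarrow> (nat \<Rightarrow> nat) \<Rightarrow> nat \<Rightarrow> real" where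
  "G A I \<pi> l = local_stat A \<pi> (I l)"

definition G_supnorm :: "(nat list \<Rightarrow> real) \<Rightarrow> (nat \<Rightarrow> nat set) \<Rightarrow> nat \<Rightarrow> (nat \<Rightarrow> nat) \<Rightarrow> real" where
  "G_supnorm A I L \<pi> = Max ((\<lambda>l. \<bar>G A I \<pi> l\<bar>) ` {1..L})"

definition p_multi :: "(nat list \<Rightarrow> real) \<Rightarrow> (nat \<Rightarrow> nat set) \<Rightarrow> nat \<Rightarrow> nat \<Rightarrow> real
    \<Rightarrow> (nat \<Rightarrow> nat \<Rightarrow> nat) \<Rightarrow> real \<Rightarrow> real" where
  "p_multi A I L B T perms U =
     (real (card {b \<in> {1..B}. G_supnorm A I L (perms b) > T})
      + U * (1 + real (card {b \<in> {1..B}. G_supnorm A I L (perms b) = T}))) / (real B + 1)"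

definition perm_measure :: "nat \<Rightarrow> (nat \<Rightarrow> nat) measure" where
  "perm_measure n = measure_pmf (pmf_of_set {\<pi>. \<pi> permutes {1..n}})"

definition std_normal_measure :: "real measure" where
  "std_normal_measure = density lborel std_normal_density"

text \<open>Joint law of (Z_1..Z_n iid P, e_1..e_n iid N(0,1), pi_1..pi_B iid uniform permutations, U ~ U(0,1)),
  all independent.\<close>
definition joint_measure :: "'z measure \<Rightarrow> nat \<Rightarrow> nat
    \<Rightarrow> ((nat \<Rightarrow> 'z) \<times> (nat \<Rightarrow> real) \<times> (nat \<Rightarrow> nat \<Rightarrow> nat) \<times> real) measure" where
  "joint_measure P n B =
     PiM {1..n} (\<lambda>_. P) \<Otimes>\<^sub>M (PiM {1..n} (\<lambda>_. std_normal_measure) \<Otimes>\<^sub>M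
       (PiM {1..B} (\<lambda>_. perm_measure n) \<Otimes>\<^sub>M uniform_measure lborel {0..1}))"

end

theory Submission
  imports Defs "HOL-Combinatorics.Permutations"
begin

definition phi :: "real \<Rightarrow> real \<Rightarrow> real \<Rightarrow> real" where
  "phi c K M = min (max (c - K) 0) M"

lemma tiling:
  fixes t :: "nat \<Rightarrow> real"
  assumes "finite X"
  shows "(\<Sum>k\<in>X. phi c (card {j\<in>X. t j > t k}) (card {j\<in>X. t j = t k}) / card {j\<in>X. t j = t k})
     = min (max c 0) (card X)"
  using assms
proof (induction "card X" arbitrary: X c rule: less_induct)
  case less
  show ?case
  proof (cases "X = {}")
    case True thus ?thesis by (simp add: phi_def)
  next
    case False
    define m where "m = Max (t ` X)"
    define C where "C = {k\<in>X. t k = m}"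
    define X' where "X' = X - C"
    have mX: "m \<in> t ` X" unfolding m_def using False less.prems by auto
    have mge: "\<And>k. k \<in> X \<Longrightarrow> t k \<le> m" unfolding m_def using less.prems by auto
    have Cne: "C \<noteq> {}" using mX C_def by auto
    have finC: "finite C" "finite X'" using less.prems C_def X'_def by auto
    have XC: "X = C \<union> X'" "C \<inter> X' = {}" using C_def X'_def by auto
    have cardX: "card X = card C + card X'" using XC finC card_Un_disjoint by metis
    have cardlt: "card X' < card X" using cardX Cne finC by auto
    have IH: "(\<Sum>k\<in>X'. phi (c - card C) (card {j\<in>X'. t j > t k}) (card {j\<in>X'. t j = t k}) / card {j\<in>X'. t j = t k})
     = min (max (c - card C) 0) (card X')" using less.hyps[OF cardlt finC(2)] .
    have s1: "(\<Sum>k\<in>C. phi c (card {j\<in>X. t j > t k}) (card {j\<in>X. t j = t k}) / card {j\<in>X. t j = t k})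
        = min (max c 0) (card C)"
    proof -
      have a1: "\<And>k. k \<in> C \<Longrightarrow> {j\<in>X. t j > t k} = {}" using mge C_def by force
      have a2: "\<And>k. k \<in> C \<Longrightarrow> {j\<in>X. t j = t k} = C" using C_def by auto
      have "(\<Sum>k\<in>C. phi c (card {j\<in>X. t j > t k}) (card {j\<in>X. t j = t k}) / card {j\<in>X. t j = t k})
         = (\<Sum>k\<in>C. phi c 0 (card C) / card C)" by (intro sum.cong refl) (simp only: a1 a2 card.empty of_nat_0)
      also have "\<dots> = phi c 0 (card C)" using Cne finC by simp
      finally show ?thesis by (simp add: phi_def)
    qed
    have s2: "(\<Sum>k\<in>X'. phi c (card {j\<in>X. t j > t k}) (card {j\<in>X. t j = t k}) / card {j\<in>X. t j = t k})
        = (\<Sum>k\<in>X'. phi (c - card C) (card {j\<in>X'. t j > t k}) (card {j\<in>X'. t j = t k}) / card {j\<in>X'. t j = t k})"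
    proof (intro sum.cong refl)
      fix k assume k: "k \<in> X'"
      have tk: "t k < m" using k mge X'_def C_def by force
      have e1: "{j\<in>X. t j > t k} = C \<union> {j\<in>X'. t j > t k}" using tk X'_def C_def by auto
      have e2: "card {j\<in>X. t j > t k} = card C + card {j\<in>X'. t j > t k}"
        unfolding e1 using finC X'_def by (intro card_Un_disjoint) auto
      have e3: "{j\<in>X. t j = t k} = {j\<in>X'. t j = t k}" using tk X'_def C_def by auto
      show "phi c (card {j\<in>X. t j > t k}) (card {j\<in>X. t j = t k}) / card {j\<in>X. t j = t k}
         = phi (c - card C) (card {j\<in>X'. t j > t k}) (card {j\<in>X'. t j = t k}) / card {j\<in>X'. t j = t k}"
        unfolding e2 e3 by (simp add: phi_def algebra_simps)
    qed
    have "(\<Sum>k\<in>X. phi c (card {j\<in>X. t j > t k}) (card {j\<in>X. t j = t k}) / card {j\<in>X. t j = t k})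
       = (\<Sum>k\<in>C. phi c (card {j\<in>X. t j > t k}) (card {j\<in>X. t j = t k}) / card {j\<in>X. t j = t k})
        + (\<Sum>k\<in>X'. phi c (card {j\<in>X. t j > t k}) (card {j\<in>X. t j = t k}) / card {j\<in>X. t j = t k})"
      using XC finC by (simp add: sum.union_disjoint)
    also have "\<dots> = min (max c 0) (card C) + min (max (c - card C) 0) (card X')"
      using s1 s2 IH by simp
    also have "\<dots> = min (max c 0) (card X)" using cardX by (simp add: min_def max_def)
    finally show ?thesis .
  qed
qed

definition sw :: "nat \<Rightarrow> nat \<Rightarrow> nat" where
  "sw k j = (if j = 0 then k else if j = k then 0 else j)"

lemma sw_sw[simp]: "sw k (sw k j) = j" by (simp add: sw_def)
lemma sw_in: "k \<in> {0..B} \<Longrightarrow> j \<in> {0..B} \<Longrightarrow> sw k j \<in> {0..B}" by (auto simp: sw_def)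

lemma card_sw:
  fixes t :: "nat \<Rightarrow> real"
  assumes k: "k \<in> {0..B}"
  shows "card {j\<in>{0..B}. P (t (sw k j))} = card {j\<in>{0..B}. P (t j)}"
proof -
  have "bij_betw (sw k) {j\<in>{0..B}. P (t (sw k j))} {j\<in>{0..B}. P (t j)}"
    by (rule bij_betw_byWitness[where f'="sw k"]) (use k in \<open>auto simp: sw_def\<close>)
  thus ?thesis by (rule bij_betw_same_card)
qed

definition W :: "real \<Rightarrow> nat \<Rightarrow> (nat \<Rightarrow> real) \<Rightarrow> real" where
  "W c B t = phi c (card {b\<in>{1..B}. t b > t 0}) (1 + card {b\<in>{1..B}. t b = t 0})
       / (1 + card {b\<in>{1..B}. t b = t 0})"

lemma W_alt:
  fixes t :: "nat \<Rightarrow> real"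
  shows "W c B t = phi c (card {j\<in>{0..B}. t j > t 0}) (card {j\<in>{0..B}. t j = t 0})
       / (card {j\<in>{0..B}. t j = t 0})"
proof -
  have e1: "{j\<in>{0..B}. t j > t 0} = {b\<in>{1..B}. t b > t 0}" by (auto simp: Suc_le_eq intro!: gr0I)
  have e2: "{j\<in>{0..B}. t j = t 0} = insert 0 {b\<in>{1..B}. t b = t 0}" by auto
  have e3: "card {j\<in>{0..B}. t j = t 0} = 1 + card {b\<in>{1..B}. t b = t 0}"
    unfolding e2 by simp
  show ?thesis unfolding W_def e1 e3 by simp
qed

lemma sym_sum:
  fixes g :: "'a \<Rightarrow> real"
  assumes Y: "finite Y"
  shows "(\<Sum>x\<in>PiE {0..B} (\<lambda>_. Y). W c B (g \<circ> x))
       = card (PiE {0..B} (\<lambda>_. Y)) * min (max c 0) (real B + 1) / (real B + 1)"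
proof -
  let ?X = "PiE {0..B} (\<lambda>_. Y)"
  define Wk where "Wk k x = phi c (card {j\<in>{0..B}. (g \<circ> x) j > (g \<circ> x) k})
     (card {j\<in>{0..B}. (g \<circ> x) j = (g \<circ> x) k}) / (card {j\<in>{0..B}. (g \<circ> x) j = (g \<circ> x) k})" for k x
  have eqk: "(\<Sum>x\<in>?X. W c B (g \<circ> x)) = (\<Sum>x\<in>?X. Wk k x)" if k: "k \<in> {0..B}" for k
  proof -
    have "(\<Sum>x\<in>?X. W c B (g \<circ> x)) = (\<Sum>x\<in>?X. W c B (g \<circ> (x \<circ> sw k)))"
    proof (rule sum.reindex_bij_witness[where i="\<lambda>x. x \<circ> sw k" and j="\<lambda>x. x \<circ> sw k"])
      fix x assume x: "x \<in> ?X"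
      show "x \<circ> sw k \<circ> sw k = x" by (simp add: fun_eq_iff)
      show "x \<circ> sw k \<in> ?X" using x k by (auto simp: PiE_iff sw_def extensional_def)
    next
      fix x assume x: "x \<in> ?X"
      show "x \<circ> sw k \<circ> sw k = x" by (simp add: fun_eq_iff)
      show "x \<circ> sw k \<in> ?X" using x k by (auto simp: PiE_iff sw_def extensional_def)
      show "W c B (g \<circ> (x \<circ> sw k \<circ> sw k)) = W c B (g \<circ> x)" by (simp add: fun_eq_iff comp_def)
    qed
    also have "\<dots> = (\<Sum>x\<in>?X. Wk k x)"
    proof (intro sum.cong refl)
      fix x
      have s0: "sw k 0 = k" by (simp add: sw_def)
      show "W c B (g \<circ> (x \<circ> sw k)) = Wk k x"
        unfolding W_alt Wk_def
        using card_sw[OF k, of "\<lambda>v. v > g (x k)" "g \<circ> x"] card_sw[OF k, of "\<lambda>v. v = g (x k)" "g \<circ> x"]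
        by (simp add: s0)
    qed
    finally show ?thesis .
  qed
  have "(real B + 1) * (\<Sum>x\<in>?X. W c B (g \<circ> x)) = (\<Sum>k\<in>{0..B}. (\<Sum>x\<in>?X. W c B (g \<circ> x)))"
    by simp
  also have "\<dots> = (\<Sum>k\<in>{0..B}. (\<Sum>x\<in>?X. Wk k x))" by (rule sum.cong[OF refl]) (simp add: eqk)
  also have "\<dots> = (\<Sum>x\<in>?X. (\<Sum>k\<in>{0..B}. Wk k x))" by (rule sum.swap)
  also have "\<dots> = (\<Sum>x\<in>?X. min (max c 0) (real B + 1))"
  proof (intro sum.cong refl)
    fix x
    show "(\<Sum>k\<in>{0..B}. Wk k x) = min (max c 0) (real B + 1)"
      unfolding Wk_def using tiling[of "{0..B}" c "g \<circ> x"] by simp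
  qed
  also have "\<dots> = card ?X * min (max c 0) (real B + 1)" by simp
  finally show ?thesis by (simp add: field_simps)
qed

lemma measure_unif_lt:
  fixes a :: real
  shows "measure (uniform_measure lborel {0..1::real}) {u. u < a} = min (max a 0) 1"
proof -
  have "measure (uniform_measure lborel {0..1::real}) {u. u < a} = measure lborel ({0..1::real} \<inter> {u. u < a}) / measure lborel {0..1::real}"
    by (rule measure_uniform_measure) auto
  also have "\<dots> = measure lborel ({0..1::real} \<inter> {u. u < a})" by simp
  also have "\<dots> = min (max a 0) 1"
  proof (cases "a \<le> 0")
    case True
    hence "{0..1::real} \<inter> {u. u < a} = {}" by auto
    thus ?thesis using True by simp
  next
    case False
    show ?thesis
    proof (cases "a \<le> 1")
      case True
      hence "{0..1::real} \<inter> {u. u < a} = {0..<a}" by auto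
      thus ?thesis using True False by simp
    next
      case F2: False
      hence "{0..1::real} \<inter> {u. u < a} = {0..1}" by auto
      thus ?thesis using F2 by simp
    qed
  qed
  finally show ?thesis .
qed

lemma measure_unif_p:
  fixes K Mr \<alpha> :: real
  assumes "Mr > 0" "0 < d"
  shows "measure (uniform_measure lborel {0..1::real}) {u. (K + u * Mr) / d < \<alpha>}
       = phi (\<alpha> * d) K Mr / Mr"
proof -
  have "{u. (K + u * Mr) / d < \<alpha>} = {u. u < (\<alpha> * d - K) / Mr}"
    using assms by (auto simp: field_simps)
  hence "measure (uniform_measure lborel {0..1::real}) {u. (K + u * Mr) / d < \<alpha>}
     = min (max ((\<alpha> * d - K) / Mr) 0) 1" using measure_unif_lt by simp
  also have "\<dots> = phi (\<alpha> * d) K Mr / Mr"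
    using assms unfolding phi_def
    by (cases "\<alpha> * d - K \<le> 0"; cases "\<alpha> * d - K \<le> Mr") (auto simp: field_simps min_def max_def)
  finally show ?thesis .
qed

lemma integral_PiM_pmf_of_set:
  fixes f :: "('i \<Rightarrow> 'a) \<Rightarrow> real"
  assumes I: "finite I" and Y: "finite Y" "Y \<noteq> {}"
    and f: "f \<in> borel_measurable (PiM I (\<lambda>_. measure_pmf (pmf_of_set Y)))"
  shows "integral\<^sup>L (PiM I (\<lambda>_. measure_pmf (pmf_of_set Y))) f
       = (\<Sum>x\<in>PiE I (\<lambda>_. Y). f x) / card (PiE I (\<lambda>_. Y))"
proof -
  let ?p = "pmf_of_set Y"
  let ?M = "PiM I (\<lambda>_. measure_pmf ?p)"
  let ?Q = "PiE I (\<lambda>_. Y)"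
  interpret ps: product_sigma_finite "\<lambda>_. measure_pmf ?p"
    by (auto simp: product_sigma_finite_def intro: measure_pmf.sigma_finite_measure_axioms)
  interpret pr: prob_space ?M by (rule prob_space_PiM) (rule prob_space_measure_pmf)
  have finQ: "finite ?Q" using I Y by (simp add: finite_PiE)
  have cardQ: "card ?Q = card Y ^ card I" using I by (simp add: card_PiE)
  have single: "{x} = PiE I (\<lambda>i. {x i})" if "x \<in> ?Q" for x
    using that by (auto simp: PiE_iff extensional_def fun_eq_iff) metis
  have sets_single: "{x} \<in> sets ?M" if "x \<in> ?Q" for x
    using single[OF that] I by (metis sets_PiM_I_finite sets_measure_pmf UNIV_I)
  have em_single: "emeasure ?M {x} = (1 / card Y) ^ card I" if x: "x \<in> ?Q" for x
  proof -
    have "emeasure ?M {x} = (\<Prod>i\<in>I. emeasure (measure_pmf ?p) {x i})"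
      unfolding single[OF x] using I by (intro ps.emeasure_PiM) auto
    also have "\<dots> = (\<Prod>i\<in>I. ennreal (1 / card Y))"
      using x Y by (intro prod.cong refl) (auto simp: emeasure_pmf_of_set PiE_iff ennreal_of_nat_eq_real_of_nat divide_ennreal)
    also have "\<dots> = ennreal ((1 / card Y) ^ card I)" by (simp add: prod_ennreal ennreal_power)
    finally show ?thesis .
  qed
  have m_single: "measure ?M {x} = (1 / card Y) ^ card I" if x: "x \<in> ?Q" for x
    using em_single[OF x] by (simp add: pr.emeasure_eq_measure)
  have sets_Q: "?Q \<in> sets ?M" using I by (intro sets_PiM_I_finite) auto
  have emQ: "emeasure ?M ?Q = 1"
  proof -
    have "emeasure ?M ?Q = (\<Prod>i\<in>I. emeasure (measure_pmf ?p) Y)"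
      using I by (intro ps.emeasure_PiM) auto
    also have "\<dots> = 1" using Y by (simp add: emeasure_pmf_of_set)
    finally show ?thesis .
  qed
  have AEQ: "AE x in ?M. x \<in> ?Q"
    using pr.AE_prob_1[of ?Q] emQ sets_Q by (simp add: pr.emeasure_eq_measure)
  have "integral\<^sup>L ?M f = integral\<^sup>L ?M (\<lambda>x. f x * indicator ?Q x)"
    by (intro integral_cong_AE) (use f sets_Q AEQ in auto)
  also have "\<dots> = (\<Sum>a\<in>?Q. f a * measure ?M {a})"
    using finQ sets_single em_single by (intro integral_indicator_finite_real) auto
  also have "\<dots> = (\<Sum>a\<in>?Q. f a) * (1 / card Y) ^ card I"
    by (simp add: m_single sum_distrib_right)
  also have "\<dots> = (\<Sum>a\<in>?Q. f a) / card ?Q"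
    by (simp add: cardQ power_one_over field_simps)
  finally show ?thesis .
qed

definition Rel :: "(nat \<Rightarrow> 'a::linorder) \<Rightarrow> nat \<Rightarrow> (nat \<times> nat) set" where
  "Rel s n = {(i,j). i \<in> {1..n} \<and> j \<in> {1..n} \<and> s i \<le> s j}"

definition Tr :: "(nat list \<Rightarrow> real) \<Rightarrow> (nat \<Rightarrow> nat set) \<Rightarrow> nat \<Rightarrow> (nat \<times> nat) set \<Rightarrow> real" where
  "Tr A I L R = Max ((\<lambda>l. A (map (\<lambda>i. card {j \<in> I l. (j,i) \<in> R}) (sorted_list_of_set (I l)))) ` {1..L})"

definition Tm :: "(nat list \<Rightarrow> real) \<Rightarrow> (nat \<Rightarrow> nat set) \<Rightarrow> nat \<Rightarrow> (nat \<Rightarrow> 'a::linorder) \<Rightarrow> real" where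
  "Tm A I L s = Max ((\<lambda>l. local_stat A s (I l)) ` {1..L})"

lemma T_multi_Tm: "T_multi A I L s = Tm A I L s"
  by (simp add: T_multi_def Tm_def)

lemma T_Rel:
  assumes "\<forall>l\<in>{1..L}. I l \<subseteq> {1..n} \<and> finite (I l)"
  shows "Tm A I L s = Tr A I L (Rel s n)"
  unfolding Tm_def Tr_def
proof (intro arg_cong[where f=Max] image_cong refl)
  fix l assume l: "l \<in> {1..L}"
  have sub: "I l \<subseteq> {1..n}" "finite (I l)" using assms l by auto
  show "local_stat A s (I l) = A (map (\<lambda>i. card {j \<in> I l. (j,i) \<in> Rel s n}) (sorted_list_of_set (I l)))"
    unfolding local_stat_def
  proof (intro arg_cong[where f=A] map_cong refl)
    fix i assume "i \<in> set (sorted_list_of_set (I l))"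
    hence i: "i \<in> I l" using sub by simp
    have "{j \<in> I l. s j \<le> s i} = {j \<in> I l. (j,i) \<in> Rel s n}"
      using i sub unfolding Rel_def by auto
    thus "local_rank s (I l) i = card {j \<in> I l. (j,i) \<in> Rel s n}"
      unfolding local_rank_def by simp
  qed
qed

lemma Gsup_T:
  fixes \<pi> :: "nat \<Rightarrow> nat"
  assumes "\<forall>r. A r \<ge> 0"
  shows "G_supnorm A I L \<pi> = Tm A I L \<pi>"
  unfolding G_supnorm_def Tm_def G_def using assms
  by (intro arg_cong[where f=Max] image_cong refl) (simp add: local_stat_def)

lemma Rel_comp_iff:
  assumes "\<sigma> permutes {1..n}"
  shows "(i,j) \<in> Rel (f \<circ> \<sigma>) n \<longleftrightarrow> i \<in> {1..n} \<and> j \<in> {1..n} \<and> (\<sigma> i, \<sigma> j) \<in> Rel f n"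
  using permutes_in_image[OF assms(1)] unfolding Rel_def by auto

lemma Rel_comp:
  assumes "\<sigma> permutes {1..n}" "Rel s n = Rel s' n"
  shows "Rel (s \<circ> \<sigma>) n = Rel (s' \<circ> \<sigma>) n"
proof (rule set_eqI)
  fix x :: "nat \<times> nat"
  obtain i j where x: "x = (i,j)" by (cases x)
  show "x \<in> Rel (s \<circ> \<sigma>) n \<longleftrightarrow> x \<in> Rel (s' \<circ> \<sigma>) n"
    using Rel_comp_iff[OF assms(1), of i j s] Rel_comp_iff[OF assms(1), of i j s'] assms(2) x by simp
qed

definition rk :: "(nat \<Rightarrow> 'a::linorder) \<Rightarrow> nat \<Rightarrow> nat \<Rightarrow> nat" where
  "rk s n i = (if i \<in> {1..n} then card {k\<in>{1..n}. s k \<le> s i} else i)"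

lemma rk_mono_iff:
  assumes "i \<in> {1..n}" "j \<in> {1..n}"
  shows "rk s n i \<le> rk s n j \<longleftrightarrow> s i \<le> s j"
proof
  assume "s i \<le> s j"
  hence "{k\<in>{1..n}. s k \<le> s i} \<subseteq> {k\<in>{1..n}. s k \<le> s j}" by auto
  thus "rk s n i \<le> rk s n j" using assms unfolding rk_def by (simp add: card_mono)
next
  assume h: "rk s n i \<le> rk s n j"
  show "s i \<le> s j"
  proof (rule ccontr)
    assume "\<not> s i \<le> s j"
    hence lt: "s j < s i" by simp
    have sub: "{k\<in>{1..n}. s k \<le> s j} \<subseteq> {k\<in>{1..n}. s k \<le> s i}" using lt by auto
    have "i \<in> {k\<in>{1..n}. s k \<le> s i} - {k\<in>{1..n}. s k \<le> s j}" using lt assms by auto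
    hence "{k\<in>{1..n}. s k \<le> s j} \<noteq> {k\<in>{1..n}. s k \<le> s i}" by blast
    hence "{k\<in>{1..n}. s k \<le> s j} \<subset> {k\<in>{1..n}. s k \<le> s i}" using sub by blast
    hence "card {k\<in>{1..n}. s k \<le> s j} < card {k\<in>{1..n}. s k \<le> s i}" by (intro psubset_card_mono) auto
    thus False using h assms unfolding rk_def by simp
  qed
qed

lemma Rel_rk: "Rel (rk s n) n = Rel s n"
  unfolding Rel_def by (rule set_eqI) (auto simp: rk_mono_iff)

lemma rk_perm:
  assumes inj: "inj_on s {1..n}"
  shows "rk s n permutes {1..n}"
proof (rule bij_imp_permutes)
  show "\<And>x. x \<notin> {1..n} \<Longrightarrow> rk s n x = x" by (auto simp: rk_def)
  have into: "rk s n ` {1..n} \<subseteq> {1..n}"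
  proof
    fix y assume "y \<in> rk s n ` {1..n}"
    then obtain i where i: "i \<in> {1..n}" "y = rk s n i" by auto
    have "i \<in> {k\<in>{1..n}. s k \<le> s i}" using i by auto
    hence "0 < card {k\<in>{1..n}. s k \<le> s i}" by (subst card_gt_0_iff) auto
    hence "card {k\<in>{1..n}. s k \<le> s i} \<ge> 1" by simp
    moreover have "card {k\<in>{1..n}. s k \<le> s i} \<le> card {1..n}"
      by (intro card_mono) auto
    ultimately show "y \<in> {1..n}" using i by (simp add: rk_def)
  qed
  have injr: "inj_on (rk s n) {1..n}"
  proof (rule inj_onI)
    fix i j assume ij: "i \<in> {1..n}" "j \<in> {1..n}" "rk s n i = rk s n j"
    have "s i \<le> s j" using rk_mono_iff[OF ij(1,2), of s] ij(3) by simp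
    moreover have "s j \<le> s i" using rk_mono_iff[OF ij(2,1), of s] ij(3) by simp
    ultimately have "s i = s j" by simp
    thus "i = j" using inj ij(1,2) by (simp add: inj_on_eq_iff)
  qed
  show "bij_betw (rk s n) {1..n} {1..n}"
    using injr into by (simp add: bij_betw_def endo_inj_surj)
qed

lemma perm_sum_eq:
  fixes s :: "nat \<Rightarrow> real" and f :: "real \<Rightarrow> real"
  assumes inj: "inj_on s {1..n}"
    and I: "\<forall>l\<in>{1..L}. I l \<subseteq> {1..n} \<and> finite (I l)"
    and A: "\<forall>r. A r \<ge> 0"
  shows "(\<Sum>\<sigma>\<in>{\<sigma>. \<sigma> permutes {1..n}}. f (T_multi A I L (s \<circ> \<sigma>)))
       = (\<Sum>\<pi>\<in>{\<pi>. \<pi> permutes {1..n}}. f (G_supnorm A I L \<pi>))"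
proof -
  let ?r = "rk s n"
  have r: "?r permutes {1..n}" by (rule rk_perm[OF inj])
  have "(\<Sum>\<pi>\<in>{\<pi>. \<pi> permutes {1..n}}. f (G_supnorm A I L \<pi>))
      = (\<Sum>\<pi>\<in>{\<pi>. \<pi> permutes {1..n}}. f (Tm A I L (\<pi>::nat\<Rightarrow>nat)))"
    using Gsup_T[OF A] by simp
  also have "\<dots> = (\<Sum>\<sigma>\<in>{\<sigma>. \<sigma> permutes {1..n}}. f (Tm A I L (?r \<circ> \<sigma>)))"
    by (rule setum_permutations_compose_left[OF r])
  also have "\<dots> = (\<Sum>\<sigma>\<in>{\<sigma>. \<sigma> permutes {1..n}}. f (T_multi A I L (s \<circ> \<sigma>)))"
  proof (intro sum.cong refl)
    fix \<sigma> assume "\<sigma> \<in> {\<sigma>. \<sigma> permutes {1..n}}"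
    hence sp: "\<sigma> permutes {1..n}" by simp
    have "Rel (?r \<circ> \<sigma>) n = Rel (s \<circ> \<sigma>) n" by (rule Rel_comp[OF sp Rel_rk])
    moreover have "Tm A I L (?r \<circ> \<sigma>) = Tr A I L (Rel (?r \<circ> \<sigma>) n)" by (rule T_Rel[OF I])
    moreover have "Tm A I L (s \<circ> \<sigma>) = Tr A I L (Rel (s \<circ> \<sigma>) n)" by (rule T_Rel[OF I])
    ultimately show "f (Tm A I L (?r \<circ> \<sigma>)) = f (T_multi A I L (s \<circ> \<sigma>))"
      by (simp add: T_multi_Tm)
  qed
  finally show ?thesis by simp
qed

lemma meas_S:
  assumes S: "(\<lambda>(z, d). S z d) \<in> P \<Otimes>\<^sub>M PiM {1..n} (\<lambda>_. P) \<rightarrow>\<^sub>M borel"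
    and i: "i \<in> {1..n}"
  shows "(\<lambda>D. S (D i) D) \<in> borel_measurable (PiM {1..n} (\<lambda>_. P))"
proof -
  have "(\<lambda>D. (D i, D)) \<in> PiM {1..n} (\<lambda>_. P) \<rightarrow>\<^sub>M P \<Otimes>\<^sub>M PiM {1..n} (\<lambda>_. P)"
    using i by (intro measurable_Pair measurable_component_singleton measurable_ident_sets) auto
  from measurable_compose[OF this S] show ?thesis by simp
qed

lemma meas_score:
  assumes S: "(\<lambda>(z, d). S z d) \<in> P \<Otimes>\<^sub>M PiM {1..n} (\<lambda>_. P) \<rightarrow>\<^sub>M borel"
    and i: "i \<in> {1..n}"
    and f: "f \<in> X \<rightarrow>\<^sub>M PiM {1..n} (\<lambda>_. P)"
    and g: "g \<in> X \<rightarrow>\<^sub>M PiM {1..n} (\<lambda>_. M)" and sM: "sets M = sets borel"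
  shows "(\<lambda>x. score S \<epsilon> (f x) (g x) i) \<in> borel_measurable X"
proof -
  have 1: "(\<lambda>x. S (f x i) (f x)) \<in> borel_measurable X"
    using measurable_compose[OF f meas_S[OF S i]] by simp
  have "(\<lambda>e. e i) \<in> PiM {1..n} (\<lambda>_. M) \<rightarrow>\<^sub>M M" using i by (intro measurable_component_singleton) auto
  have "(\<lambda>x. g x i) \<in> X \<rightarrow>\<^sub>M M" using i g by (intro measurable_compose[OF g] measurable_component_singleton) auto
  moreover have e: "measurable X M = borel_measurable X" by (rule measurable_cong_sets[OF refl sM])
  ultimately have 2: "(\<lambda>x. g x i) \<in> borel_measurable X" by simp
  show ?thesis unfolding score_def
    by (intro borel_measurable_add 1 borel_measurable_times borel_measurable_const 2)
qed

lemma Rel_eq_iff: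
  assumes R: "R \<subseteq> {1..n} \<times> {1..n}"
  shows "Rel s n = R \<longleftrightarrow> (\<forall>i\<in>{1..n}. \<forall>j\<in>{1..n}. (s i \<le> s j) = ((i,j) \<in> R))"
proof
  assume "Rel s n = R" thus "\<forall>i\<in>{1..n}. \<forall>j\<in>{1..n}. (s i \<le> s j) = ((i,j) \<in> R)"
    unfolding Rel_def by auto
next
  assume h: "\<forall>i\<in>{1..n}. \<forall>j\<in>{1..n}. (s i \<le> s j) = ((i,j) \<in> R)"
  show "Rel s n = R"
  proof (rule set_eqI)
    fix x :: "nat \<times> nat"
    obtain a b where x: "x = (a,b)" by (cases x)
    show "x \<in> Rel s n \<longleftrightarrow> x \<in> R"
    proof (cases "a \<in> {1..n} \<and> b \<in> {1..n}")
      case True thus ?thesis using h x unfolding Rel_def by auto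
    next
      case False thus ?thesis using R x unfolding Rel_def by auto
    qed
  qed
qed

lemma meas_Rel:
  fixes s :: "'x \<Rightarrow> nat \<Rightarrow> real"
  assumes s: "\<And>i. i \<in> {1..n} \<Longrightarrow> (\<lambda>x. s x i) \<in> borel_measurable X"
  shows "(\<lambda>x. Rel (s x) n) \<in> X \<rightarrow>\<^sub>M count_space (Pow ({1..n} \<times> {1..n}))"
proof -
  have 1: "(\<lambda>x. Rel (s x) n) \<in> space X \<rightarrow> Pow ({1..n} \<times> {1..n})" unfolding Rel_def by auto
  have 2: "(\<lambda>x. Rel (s x) n) -` {R} \<inter> space X \<in> sets X" if R: "R \<in> Pow ({1..n} \<times> {1..n})" for R
  proof -
    have "(\<lambda>x. Rel (s x) n) -` {R} \<inter> space X = {x \<in> space X. \<forall>i\<in>{1..n}. \<forall>j\<in>{1..n}. (s x i \<le> s x j) = ((i,j) \<in> R)}"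
      using Rel_eq_iff[of R n] R by auto
    also have "\<dots> \<in> sets X"
    proof (intro sets.sets_Collect_finite_All finite_atLeastAtMost)
      fix i j assume i: "i \<in> {1..n}" and j: "j \<in> {1..n}"
      note [measurable] = s[OF i] s[OF j]
      show "{x \<in> space X. (s x i \<le> s x j) = ((i,j) \<in> R)} \<in> sets X" by measurable
    qed
    finally show ?thesis .
  qed
  show ?thesis using 1 2 by (subst measurable_count_space_eq2) auto
qed

lemma meas_T:
  fixes s :: "'x \<Rightarrow> nat \<Rightarrow> real"
  assumes I: "\<forall>l\<in>{1..L}. I l \<subseteq> {1..n} \<and> finite (I l)"
    and s: "\<And>i. i \<in> {1..n} \<Longrightarrow> (\<lambda>x. s x i) \<in> borel_measurable X"
  shows "(\<lambda>x. T_multi A I L (s x)) \<in> borel_measurable X"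
proof -
  have r: "(\<lambda>x. Rel (s x) n) \<in> X \<rightarrow>\<^sub>M count_space (Pow ({1..n} \<times> {1..n}))"
    using meas_Rel[of n s X] s by blast
  have t: "Tr A I L \<in> count_space (Pow ({1..n} \<times> {1..n})) \<rightarrow>\<^sub>M borel" by simp
  have "(\<lambda>x. Tr A I L (Rel (s x) n)) \<in> borel_measurable X"
    using measurable_compose[OF r t] .
  moreover have "T_multi A I L (s x) = Tr A I L (Rel (s x) n)" for x
    using T_Rel[OF I] by (simp add: T_multi_Tm)
  ultimately show ?thesis by simp
qed

lemma card_filter_sum:
  assumes "finite X"
  shows "real (card {b\<in>X. Q b}) = (\<Sum>b\<in>X. if Q b then 1 else 0)"
proof -
  have "(\<Sum>b\<in>{b\<in>X. Q b}. (1::real)) = (\<Sum>b\<in>X. if Q b then 1 else 0)"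
    by (rule sum.inter_filter[OF assms])
  thus ?thesis by simp
qed

lemma meas_p:
  assumes T: "T \<in> borel_measurable X"
    and g: "\<And>b. b \<in> {1..B} \<Longrightarrow> (\<lambda>x. G_supnorm A I L (ps x b)) \<in> borel_measurable X"
    and U: "U \<in> borel_measurable X"
  shows "(\<lambda>x. p_multi A I L B (T x) (ps x) (U x)) \<in> borel_measurable X"
proof -
  have eq: "p_multi A I L B (T x) (ps x) (U x) =
     ((\<Sum>b\<in>{1..B}. if G_supnorm A I L (ps x b) > T x then 1 else 0)
      + U x * (1 + (\<Sum>b\<in>{1..B}. if G_supnorm A I L (ps x b) = T x then 1 else 0))) / (real B + 1)" for x
    unfolding p_multi_def by (simp only: card_filter_sum[OF finite_atLeastAtMost])
  have m1: "(\<lambda>x. \<Sum>b\<in>{1..B}. if G_supnorm A I L (ps x b) > T x then 1 else 0::real) \<in> borel_measurable X"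
  proof (rule borel_measurable_sum)
    fix b assume b: "b \<in> {1..B}"
    note [measurable] = g[OF b] T
    show "(\<lambda>x. if G_supnorm A I L (ps x b) > T x then 1 else 0::real) \<in> borel_measurable X" by measurable
  qed
  have m2: "(\<lambda>x. \<Sum>b\<in>{1..B}. if G_supnorm A I L (ps x b) = T x then 1 else 0::real) \<in> borel_measurable X"
  proof (rule borel_measurable_sum)
    fix b assume b: "b \<in> {1..B}"
    note [measurable] = g[OF b] T
    show "(\<lambda>x. if G_supnorm A I L (ps x b) = T x then 1 else 0::real) \<in> borel_measurable X" by measurable
  qed
  note [measurable] = m1 m2 U
  show ?thesis unfolding eq by measurable
qed

lemma AE_coord_neq:
  fixes N :: "real measure" and c :: real
  assumes prob: "prob_space N" and sN: "sets N = sets borel"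
    and atom: "\<And>a. emeasure N {a} = 0"
    and I: "finite I" "i \<in> I" "j \<in> I" "i \<noteq> j"
  shows "AE e in PiM I (\<lambda>_. N). e i \<noteq> e j + c"
proof -
  interpret pp: product_prob_space "\<lambda>_. N" I
    by (auto simp: product_prob_space_def product_prob_space_axioms_def product_sigma_finite_def
        prob prob_space_imp_sigma_finite)
  interpret pN: pair_sigma_finite N N
    using prob by (simp add: pair_sigma_finite_def prob_space_imp_sigma_finite)
  let ?H = "{z \<in> space (N \<Otimes>\<^sub>M N). fst z = snd z + c}"
  have mf: "fst \<in> borel_measurable (N \<Otimes>\<^sub>M N)" "snd \<in> borel_measurable (N \<Otimes>\<^sub>M N)"
    using measurable_fst measurable_snd measurable_cong_sets[OF refl sN] by auto
  have Hs: "?H \<in> sets (N \<Otimes>\<^sub>M N)"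
    using mf by measurable
  have AEH: "AE z in N \<Otimes>\<^sub>M N. fst z \<noteq> snd z + c"
  proof (rule pN.AE_pair_measure)
    show "{x \<in> space (N \<Otimes>\<^sub>M N). fst x \<noteq> snd x + c} \<in> sets (N \<Otimes>\<^sub>M N)"
      using mf by measurable
    show "AE x in N. AE y in N. fst (x, y) \<noteq> snd (x, y) + c"
    proof (rule AE_I2)
      fix a
      have "{a - c} \<in> null_sets N" using atom sN by (auto simp: null_sets_def)
      from AE_not_in[OF this] show "AE y in N. fst (a, y) \<noteq> snd (a, y) + c"
        by eventually_elim auto
    qed
  qed
  have emH: "emeasure (N \<Otimes>\<^sub>M N) ?H = 0"
    using AEH Hs by (subst (asm) AE_iff_measurable[OF Hs]) auto
  let ?Bad = "{x \<in> space (PiM {i,j} (\<lambda>_. N)). x i = x j + c}"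
  have Bads: "?Bad \<in> sets (PiM {i,j} (\<lambda>_. N))"
  proof -
    have "(\<lambda>x. x i) \<in> borel_measurable (PiM {i,j} (\<lambda>_. N))"
         "(\<lambda>x. x j) \<in> borel_measurable (PiM {i,j} (\<lambda>_. N))"
    proof -
      have e: "measurable (PiM {i,j} (\<lambda>_. N)) N = borel_measurable (PiM {i,j} (\<lambda>_. N))"
        by (rule measurable_cong_sets[OF refl sN])
      show "(\<lambda>x. x i) \<in> borel_measurable (PiM {i,j} (\<lambda>_. N))"
        using measurable_component_singleton[of i "{i,j}" "\<lambda>_. N"] unfolding e by simp
      show "(\<lambda>x. x j) \<in> borel_measurable (PiM {i,j} (\<lambda>_. N))"
        using measurable_component_singleton[of j "{i,j}" "\<lambda>_. N"] unfolding e by simp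
    qed
    thus ?thesis by measurable
  qed
  have "emeasure (PiM {i,j} (\<lambda>_. N)) ?Bad = (\<integral>\<^sup>+ x. indicator ?Bad x \<partial>PiM {i,j} (\<lambda>_. N))"
    using Bads by simp
  also have "\<dots> = (\<integral>\<^sup>+ x. indicator ?H (x i, x j) \<partial>PiM {i,j} (\<lambda>_. N))"
    by (intro nn_integral_cong) (auto simp: indicator_def space_PiM space_pair_measure PiE_iff)
  also have "\<dots> = (\<integral>\<^sup>+ z. indicator ?H (fst z, snd z) \<partial>(N \<Otimes>\<^sub>M N))"
    using Hs I(4) by (intro pp.product_nn_integral_pair) auto
  also have "\<dots> = emeasure (N \<Otimes>\<^sub>M N) ?H" using Hs by simp
  also have "\<dots> = 0" by (rule emH)
  finally have "emeasure (PiM {i,j} (\<lambda>_. N)) ?Bad = 0" .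
  hence AE2: "AE x in PiM {i,j} (\<lambda>_. N). x i \<noteq> x j + c"
    using Bads by (subst AE_iff_measurable[OF Bads]) auto
  have dist: "distr (PiM I (\<lambda>_. N)) (PiM {i,j} (\<lambda>_. N)) (\<lambda>x. restrict x {i,j}) = PiM {i,j} (\<lambda>_. N)"
    using I by (intro pp.distr_PiM_restrict_finite) auto
  have "AE x in PiM I (\<lambda>_. N). (restrict x {i,j}) i \<noteq> (restrict x {i,j}) j + c"
  proof (rule AE_distrD[of "\<lambda>x. restrict x {i,j}" "PiM I (\<lambda>_. N)" "PiM {i,j} (\<lambda>_. N)"])
    show "(\<lambda>x. restrict x {i,j}) \<in> PiM I (\<lambda>_. N) \<rightarrow>\<^sub>M PiM {i,j} (\<lambda>_. N)"
      using I by (intro measurable_restrict_subset) auto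
    show "AE x in distr (PiM I (\<lambda>_. N)) (PiM {i,j} (\<lambda>_. N)) (\<lambda>x. restrict x {i,j}). x i \<noteq> x j + c"
      unfolding dist by (rule AE2)
  qed
  thus ?thesis by simp
qed

lemma sum_PiE_insert0:
  fixes g :: "(nat \<Rightarrow> 'a) \<Rightarrow> real"
  assumes Y: "finite Y"
  shows "(\<Sum>ps\<in>PiE {1..B} (\<lambda>_. Y). \<Sum>\<pi>\<in>Y. g (ps(0:=\<pi>))) = (\<Sum>x\<in>PiE {0..B} (\<lambda>_. Y). g x)"
proof -
  have "(\<Sum>ps\<in>PiE {1..B} (\<lambda>_. Y). \<Sum>\<pi>\<in>Y. g (ps(0:=\<pi>)))
      = (\<Sum>z\<in>PiE {1..B} (\<lambda>_. Y) \<times> Y. g ((fst z)(0:=snd z)))"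
    by (subst sum.cartesian_product) (simp add: case_prod_beta)
  also have "\<dots> = (\<Sum>x\<in>PiE {0..B} (\<lambda>_. Y). g x)"
  proof (rule sum.reindex_bij_witness[where i="\<lambda>x. (restrict x {1..B}, x 0)" and j="\<lambda>z. (fst z)(0:=snd z)"])
    fix z assume z: "z \<in> PiE {1..B} (\<lambda>_. Y) \<times> Y"
    show "(restrict ((fst z)(0:=snd z)) {1..B}, ((fst z)(0:=snd z)) 0) = z"
      using z by (cases z) (auto simp: PiE_iff extensional_def fun_eq_iff)
    show "(fst z)(0:=snd z) \<in> PiE {0..B} (\<lambda>_. Y)"
      using z by (cases z) (auto simp: PiE_iff extensional_def)
    show "g ((fst z)(0:=snd z)) = g ((fst z)(0:=snd z))" ..
  next
    fix x assume x: "x \<in> PiE {0..B} (\<lambda>_. Y)"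
    show "(fst (restrict x {1..B}, x 0))(0:=snd (restrict x {1..B}, x 0)) = x"
      using x by (auto simp: PiE_iff extensional_def fun_eq_iff)
    show "(restrict x {1..B}, x 0) \<in> PiE {1..B} (\<lambda>_. Y) \<times> Y"
      using x by (auto simp: PiE_iff)
  qed
  finally show ?thesis .
qed

lemma integral_snd_prob:
  fixes g :: "'b \<Rightarrow> real"
  assumes M: "prob_space M" and N: "prob_space N"
    and g: "g \<in> borel_measurable N" and bd: "\<And>y. \<bar>g y\<bar> \<le> C"
  shows "integral\<^sup>L (M \<Otimes>\<^sub>M N) (\<lambda>z. g (snd z)) = integral\<^sup>L N g"
proof -
  interpret pair_prob_space M N using M N by (simp add: pair_prob_space_def pair_sigma_finite_def prob_space_imp_sigma_finite)
  have int: "integrable (M \<Otimes>\<^sub>M N) (\<lambda>(x, y). g y)"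
    by (rule P.integrable_const_bound[where B=C]) (use g bd in auto)
  have "(\<integral>x. (\<integral>y. g y \<partial>N) \<partial>M) = integral\<^sup>L (M \<Otimes>\<^sub>M N) (\<lambda>(x, y). g y)"
    by (rule integral_fst[OF int])
  moreover have "(\<integral>x. (\<integral>y. g y \<partial>N) \<partial>M) = integral\<^sup>L N g"
    using M by (simp add: prob_space.prob_space)
  moreover have e: "(\<lambda>(x, y). g y) = (\<lambda>z. g (snd z))" by auto
  ultimately show ?thesis unfolding e by simp
qed

lemma std_normal_facts:
  shows "prob_space std_normal_measure" "sets std_normal_measure = sets borel"
    "\<And>a. emeasure std_normal_measure {a} = 0"
proof -
  show "prob_space std_normal_measure" unfolding std_normal_measure_def by (rule prob_space_normal_density) simp
  show "sets std_normal_measure = sets borel" unfolding std_normal_measure_def by simp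
  fix a
  have ae: "AE x in lborel. x \<in> {a} \<longrightarrow> ennreal (std_normal_density x) = 0"
    using AE_lborel_singleton[of a] by eventually_elim simp
  have "{a} \<in> null_sets std_normal_measure"
    unfolding std_normal_measure_def
    by (rule null_sets_density_iff[THEN iffD2]) (use ae in simp_all)
  thus "emeasure std_normal_measure {a} = 0" by auto
qed

lemma Rel_cong:
  assumes "\<forall>i\<in>{1..n}. s i = s' i"
  shows "Rel s n = Rel s' n"
  using assms unfolding Rel_def by auto

lemma T_perm:
  fixes S :: "'z \<Rightarrow> (nat \<Rightarrow> 'z) \<Rightarrow> real"
  assumes Ifin: "\<forall>l\<in>{1..L}. I l \<subseteq> {1..n} \<and> finite (I l)"
    and sym: "\<forall>z \<in> space P. \<forall>d \<in> space (PiM {1..n} (\<lambda>_. P)). \<forall>\<pi>.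
           \<pi> permutes {1..n} \<longrightarrow> S z (d \<circ> \<pi>) = S z d"
    and \<sigma>: "\<sigma> permutes {1..n}"
    and D: "D \<in> space (PiM {1..n} (\<lambda>_. P))"
  shows "T_multi A I L (score S \<epsilon> (restrict (D \<circ> \<sigma>) {1..n}) (restrict (e \<circ> \<sigma>) {1..n}))
       = T_multi A I L (score S \<epsilon> D e \<circ> \<sigma>)"
proof -
  have DPi: "D \<in> PiE {1..n} (\<lambda>_. space P)" using D by (simp add: space_PiM)
  have rD: "restrict (D \<circ> \<sigma>) {1..n} = D \<circ> \<sigma>"
  proof
    fix x show "restrict (D \<circ> \<sigma>) {1..n} x = (D \<circ> \<sigma>) x"
    proof (cases "x \<in> {1..n}")
      case True thus ?thesis by simp
    next
      case False
      hence "\<sigma> x = x" using permutes_not_in[OF \<sigma>] by blast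
      thus ?thesis using False PiE_arb[OF DPi False] by simp
    qed
  qed
  have "\<forall>i\<in>{1..n}. score S \<epsilon> (restrict (D \<circ> \<sigma>) {1..n}) (restrict (e \<circ> \<sigma>) {1..n}) i = (score S \<epsilon> D e \<circ> \<sigma>) i"
  proof
    fix i assume i: "i \<in> {1..n}"
    have si: "\<sigma> i \<in> {1..n}" using permutes_in_image[OF \<sigma>] i by simp
    have z: "D (\<sigma> i) \<in> space P" using DPi si by auto
    have "S (D (\<sigma> i)) (D \<circ> \<sigma>) = S (D (\<sigma> i)) D" using sym z D \<sigma> by blast
    thus "score S \<epsilon> (restrict (D \<circ> \<sigma>) {1..n}) (restrict (e \<circ> \<sigma>) {1..n}) i = (score S \<epsilon> D e \<circ> \<sigma>) i"
      unfolding score_def rD using i by simp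
  qed
  hence "Rel (score S \<epsilon> (restrict (D \<circ> \<sigma>) {1..n}) (restrict (e \<circ> \<sigma>) {1..n})) n = Rel (score S \<epsilon> D e \<circ> \<sigma>) n"
    by (rule Rel_cong)
  thus ?thesis by (simp add: T_multi_Tm T_Rel[OF Ifin])
qed

theorem theorem3:
  fixes P :: "'z measure"
    and S :: "'z \<Rightarrow> (nat \<Rightarrow> 'z) \<Rightarrow> real"
    and \<epsilon> :: real
    and A :: "nat list \<Rightarrow> real"
    and I :: "nat \<Rightarrow> nat set"
    and n L B :: nat
    and \<alpha> :: real
  assumes "prob_space P"
    and "(\<lambda>(z, d). S z d) \<in> P \<Otimes>\<^sub>M PiM {1..n} (\<lambda>_. P) \<rightarrow>\<^sub>M borel"
    and "\<forall>z \<in> space P. \<forall>d \<in> space (PiM {1..n} (\<lambda>_. P)). \<forall>\<pi>.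
           \<pi> permutes {1..n} \<longrightarrow> S z (d \<circ> \<pi>) = S z d"
    and "\<epsilon> > 0"
    and "\<forall>r. A r \<ge> 0"
    and "L \<ge> 1"
    and "\<forall>l \<in> {1..L}. \<exists>a b. 1 \<le> a \<and> a \<le> b \<and> b \<le> n \<and> I l = {a..b}"
    and "B \<ge> 1"
    and "0 < \<alpha>" and "\<alpha> < 1"
  shows "measure (joint_measure P n B)
           {(D, e, perms, U) \<in> space (joint_measure P n B).
              p_multi A I L B (T_multi A I L (score S \<epsilon> D e)) perms U < \<alpha>} = \<alpha>"
proof -
  note pP = assms(1) and Smeas = assms(2) and sym = assms(3) and eps = assms(4)
    and Apos = assms(5) and Iint = assms(7) and a0 = assms(9) and a1 = assms(10)
  have Ifin: "\<forall>l\<in>{1..L}. I l \<subseteq> {1..n} \<and> finite (I l)"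
  proof
    fix l assume "l \<in> {1..L}"
    then obtain a b where "1 \<le> a" "a \<le> b" "b \<le> n" "I l = {a..b}" using Iint by blast
    thus "I l \<subseteq> {1..n} \<and> finite (I l)" by auto
  qed
  define N01 where "N01 = std_normal_measure"
  define Pm where "Pm = {\<pi>::nat\<Rightarrow>nat. \<pi> permutes {1..n}}"
  define M1 where "M1 = PiM {1..n} (\<lambda>_. P)"
  define M2 where "M2 = PiM {1..n} (\<lambda>_. N01)"
  define M3 where "M3 = PiM {1..B} (\<lambda>_. measure_pmf (pmf_of_set Pm))"
  define M4 where "M4 = uniform_measure lborel {0..1::real}"
  define Nm where "Nm = M3 \<Otimes>\<^sub>M M4"
  define \<Omega> where "\<Omega> = M1 \<Otimes>\<^sub>M (M2 \<Otimes>\<^sub>M Nm)"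
  have Om: "joint_measure P n B = \<Omega>"
    unfolding joint_measure_def \<Omega>_def M1_def M2_def Nm_def M3_def M4_def N01_def perm_measure_def Pm_def ..
  have finPm: "finite Pm" "Pm \<noteq> {}" unfolding Pm_def
    using finite_permutations[of "{1..n}"] permutes_id[of "{1..n}"] by blast+
  have N01: "prob_space N01" "sets N01 = sets borel" "\<And>a. emeasure N01 {a} = 0"
    unfolding N01_def using std_normal_facts by auto
  have pM1: "prob_space M1" unfolding M1_def by (rule prob_space_PiM) (rule pP)
  have pM2: "prob_space M2" unfolding M2_def by (rule prob_space_PiM) (rule N01(1))
  have pM3: "prob_space M3" unfolding M3_def by (rule prob_space_PiM) (rule prob_space_measure_pmf)
  have pM4: "prob_space M4" unfolding M4_def by (rule prob_space_uniform_measure) auto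
  have pNm: "prob_space Nm" unfolding Nm_def by (rule prob_space_pair[OF pM3 pM4])
  have pM2N: "prob_space (M2 \<Otimes>\<^sub>M Nm)" by (rule prob_space_pair[OF pM2 pNm])
  have pOm: "prob_space \<Omega>" unfolding \<Omega>_def by (rule prob_space_pair[OF pM1 pM2N])
  interpret Om: prob_space \<Omega> by (rule pOm)
  define F where "F = (\<lambda>\<omega>::((nat\<Rightarrow>'z)\<times>(nat\<Rightarrow>real)\<times>(nat\<Rightarrow>nat\<Rightarrow>nat)\<times>real).
     p_multi A I L B (T_multi A I L (score S \<epsilon> (fst \<omega>) (fst (snd \<omega>)))) (fst (snd (snd \<omega>))) (snd (snd (snd \<omega>))))"
  define E where "E = {\<omega> \<in> space \<Omega>. F \<omega> < \<alpha>}"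
  have setE: "{(D, e, perms, U) \<in> space (joint_measure P n B).
              p_multi A I L B (T_multi A I L (score S \<epsilon> D e)) perms U < \<alpha>} = E"
    unfolding Om E_def F_def by (auto simp: case_prod_beta)
  have m_fst: "fst \<in> \<Omega> \<rightarrow>\<^sub>M M1" unfolding \<Omega>_def by (rule measurable_fst)
  have m_e: "(\<lambda>\<omega>. fst (snd \<omega>)) \<in> \<Omega> \<rightarrow>\<^sub>M M2" unfolding \<Omega>_def
    by (rule measurable_compose[OF measurable_snd measurable_fst])
  have m_Nm: "(\<lambda>\<omega>. snd (snd \<omega>)) \<in> \<Omega> \<rightarrow>\<^sub>M Nm" unfolding \<Omega>_def
    by (rule measurable_compose[OF measurable_snd measurable_snd])
  have m_ps: "(\<lambda>\<omega>. fst (snd (snd \<omega>))) \<in> \<Omega> \<rightarrow>\<^sub>M M3"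
    using measurable_compose[OF m_Nm[unfolded Nm_def] measurable_fst[of M3 M4]] by simp
  have m_U: "(\<lambda>\<omega>. snd (snd (snd \<omega>))) \<in> \<Omega> \<rightarrow>\<^sub>M M4"
    using measurable_compose[OF m_Nm[unfolded Nm_def] measurable_snd[of M3 M4]] by simp
  have sM4: "measurable X M4 = borel_measurable X" for X :: "'q measure"
    by (rule measurable_cong_sets) (simp_all add: M4_def)
  have m_sc: "(\<lambda>\<omega>. score S \<epsilon> (fst \<omega>) (fst (snd \<omega>)) i) \<in> borel_measurable \<Omega>" if i: "i \<in> {1..n}" for i
    using meas_score[OF Smeas i m_fst[unfolded M1_def] m_e[unfolded M2_def] N01(2)] .
  have m_T: "(\<lambda>\<omega>. T_multi A I L (score S \<epsilon> (fst \<omega>) (fst (snd \<omega>)))) \<in> borel_measurable \<Omega>"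
    by (rule meas_T[OF Ifin m_sc])
  have m_G3: "(\<lambda>ps. G_supnorm A I L (ps b)) \<in> borel_measurable M3" if b: "b \<in> {1..B}" for b
  proof -
    have "(\<lambda>ps. ps b) \<in> M3 \<rightarrow>\<^sub>M measure_pmf (pmf_of_set Pm)"
      unfolding M3_def using b by (intro measurable_component_singleton) auto
    moreover have "G_supnorm A I L \<in> measure_pmf (pmf_of_set Pm) \<rightarrow>\<^sub>M borel" by simp
    ultimately show ?thesis by (rule measurable_compose)
  qed
  have m_G: "(\<lambda>\<omega>. G_supnorm A I L (fst (snd (snd \<omega>)) b)) \<in> borel_measurable \<Omega>" if b: "b \<in> {1..B}" for b
    using measurable_compose[OF m_ps m_G3[OF b]] .
  have m_F: "F \<in> borel_measurable \<Omega>"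
    unfolding F_def by (rule meas_p[OF m_T m_G]) (use m_U sM4 in auto)
  have E_sets: "E \<in> sets \<Omega>" unfolding E_def using m_F by measurable
  define \<Phi> where "\<Phi> \<sigma> \<omega> = (restrict (fst \<omega> \<circ> \<sigma>) {1..n}, restrict (fst (snd \<omega>) \<circ> \<sigma>) {1..n}, snd (snd \<omega>))"
    for \<sigma> :: "nat \<Rightarrow> nat" and \<omega> :: "(nat\<Rightarrow>'z)\<times>(nat\<Rightarrow>real)\<times>(nat\<Rightarrow>nat\<Rightarrow>nat)\<times>real"
  have \<Phi>_md: "\<Phi> \<sigma> \<in> \<Omega> \<rightarrow>\<^sub>M \<Omega> \<and> distr \<Omega> \<Omega> (\<Phi> \<sigma>) = \<Omega>" if \<sigma>: "\<sigma> permutes {1..n}" for \<sigma>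
  proof -
    define f1 where "f1 = (\<lambda>D::nat\<Rightarrow>'z. \<lambda>i\<in>{1..n}. D (\<sigma> i))"
    define f2 where "f2 = (\<lambda>e::nat\<Rightarrow>real. \<lambda>i\<in>{1..n}. e (\<sigma> i))"
    have inj: "inj_on \<sigma> {1..n}" using permutes_inj_on[OF \<sigma>] .
    have into: "\<sigma> \<in> {1..n} \<rightarrow> {1..n}" using permutes_in_image[OF \<sigma>] by auto
    have d1: "distr M1 M1 f1 = M1" unfolding M1_def f1_def
      using distr_PiM_reindex[of "{1..n}" "\<lambda>_. P" \<sigma> "{1..n}"] inj into pP by simp
    have d2: "distr M2 M2 f2 = M2" unfolding M2_def f2_def
      using distr_PiM_reindex[of "{1..n}" "\<lambda>_. N01" \<sigma> "{1..n}"] inj into N01(1) by simp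
    have mf1: "f1 \<in> M1 \<rightarrow>\<^sub>M M1" unfolding M1_def f1_def
      by (intro measurable_restrict measurable_component_singleton) (use into in auto)
    have mf2: "f2 \<in> M2 \<rightarrow>\<^sub>M M2" unfolding M2_def f2_def
      by (intro measurable_restrict measurable_component_singleton) (use into in auto)
    have sfN: "sigma_finite_measure (distr Nm Nm (\<lambda>x. x))"
      using pNm by (simp add: prob_space_imp_sigma_finite)
    have sf2: "sigma_finite_measure (distr (M2 \<Otimes>\<^sub>M Nm) (M2 \<Otimes>\<^sub>M Nm) (\<lambda>(x, y). (f2 x, y)))"
      using pair_measure_distr[OF mf2 measurable_ident_sets[OF refl] sfN] d2 pM2N
      by (simp add: prob_space_imp_sigma_finite)
    have e2: "(\<lambda>(x, y). (f2 x, y)) = (\<lambda>z. (f2 (fst z), snd z))" by auto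
    have mg2: "(\<lambda>(x, y). (f2 x, y)) \<in> M2 \<Otimes>\<^sub>M Nm \<rightarrow>\<^sub>M M2 \<Otimes>\<^sub>M Nm"
      unfolding e2 by (intro measurable_Pair measurable_compose[OF measurable_fst mf2] measurable_snd)
    have d23: "distr (M2 \<Otimes>\<^sub>M Nm) (M2 \<Otimes>\<^sub>M Nm) (\<lambda>(x, y). (f2 x, y)) = M2 \<Otimes>\<^sub>M Nm"
      using pair_measure_distr[OF mf2 measurable_ident_sets[OF refl] sfN] d2 by simp
    have dall: "distr \<Omega> \<Omega> (\<lambda>(x, y). (f1 x, (\<lambda>(x, y). (f2 x, y)) y)) = \<Omega>"
      using pair_measure_distr[OF mf1 mg2 sf2] d1 d23 unfolding \<Omega>_def by simp
    have e1: "(\<lambda>(x, y). (f1 x, (\<lambda>(x, y). (f2 x, y)) y)) = (\<lambda>z. (f1 (fst z), (\<lambda>(x, y). (f2 x, y)) (snd z)))"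
      by auto
    have mall: "(\<lambda>(x, y). (f1 x, (\<lambda>(x, y). (f2 x, y)) y)) \<in> \<Omega> \<rightarrow>\<^sub>M \<Omega>"
      unfolding \<Omega>_def e1 by (intro measurable_Pair measurable_compose[OF measurable_fst mf1] measurable_compose[OF measurable_snd mg2])
    have eq: "(\<lambda>(x, y). (f1 x, (\<lambda>(x, y). (f2 x, y)) y)) = \<Phi> \<sigma>"
    proof (rule ext)
      fix z :: "(nat\<Rightarrow>'z)\<times>(nat\<Rightarrow>real)\<times>(nat\<Rightarrow>nat\<Rightarrow>nat)\<times>real"
      obtain D e r where z: "z = (D, e, r)" by (cases z) auto
      show "(\<lambda>(x, y). (f1 x, (\<lambda>(x, y). (f2 x, y)) y)) z = \<Phi> \<sigma> z"
        unfolding z \<Phi>_def f1_def f2_def by (simp add: comp_def)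
    qed
    show ?thesis using dall mall unfolding eq by simp
  qed
  have m\<Phi>: "\<Phi> \<sigma> \<in> \<Omega> \<rightarrow>\<^sub>M \<Omega>" if \<sigma>: "\<sigma> permutes {1..n}" for \<sigma>
    using \<Phi>_md[OF \<sigma>] by blast
  have intE: "(\<integral>\<omega>. (indicator E (\<Phi> \<sigma> \<omega>) :: real) \<partial>\<Omega>) = measure \<Omega> E" if \<sigma>: "\<sigma> permutes {1..n}" for \<sigma>
  proof -
    have "(\<integral>\<omega>. (indicator E (\<Phi> \<sigma> \<omega>) :: real) \<partial>\<Omega>) = integral\<^sup>L (distr \<Omega> \<Omega> (\<Phi> \<sigma>)) (indicator E)"
      using m\<Phi>[OF \<sigma>] E_sets by (subst integral_distr) auto
    also have "\<dots> = integral\<^sup>L \<Omega> (indicator E)" using \<Phi>_md[OF \<sigma>] by simp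
    also have "\<dots> = measure \<Omega> E" using E_sets by (simp add: Int_absorb2 sets.sets_into_space)
    finally show ?thesis .
  qed
  have m_ind\<Phi>: "(\<lambda>\<omega>. (indicator E (\<Phi> \<sigma> \<omega>) :: real)) \<in> borel_measurable \<Omega>" if \<sigma>: "\<sigma> permutes {1..n}" for \<sigma>
    using measurable_compose[OF m\<Phi>[OF \<sigma>] borel_measurable_indicator[OF E_sets]] .
  have int_ind\<Phi>: "integrable \<Omega> (\<lambda>\<omega>. (indicator E (\<Phi> \<sigma> \<omega>) :: real))" if \<sigma>: "\<sigma> permutes {1..n}" for \<sigma>
    by (rule Om.integrable_const_bound[where B=1]) (use m_ind\<Phi>[OF \<sigma>] in \<open>auto simp: indicator_def\<close>)
  have pt: "(indicator E (\<Phi> \<sigma> \<omega>) :: real) =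
      (if p_multi A I L B (T_multi A I L (score S \<epsilon> (fst \<omega>) (fst (snd \<omega>)) \<circ> \<sigma>)) (fst (snd (snd \<omega>))) (snd (snd (snd \<omega>))) < \<alpha> then 1 else 0)"
    if \<sigma>: "\<sigma> permutes {1..n}" and \<omega>: "\<omega> \<in> space \<Omega>" for \<sigma> \<omega>
  proof -
    have sp: "\<Phi> \<sigma> \<omega> \<in> space \<Omega>" using measurable_space[OF m\<Phi>[OF \<sigma>] \<omega>] .
    have D: "fst \<omega> \<in> space (PiM {1..n} (\<lambda>_. P))" using \<omega> unfolding \<Omega>_def M1_def by (auto simp: space_pair_measure)
    have "F (\<Phi> \<sigma> \<omega>) = p_multi A I L B (T_multi A I L (score S \<epsilon> (fst \<omega>) (fst (snd \<omega>)) \<circ> \<sigma>)) (fst (snd (snd \<omega>))) (snd (snd (snd \<omega>)))"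
      unfolding F_def \<Phi>_def using T_perm[OF Ifin sym \<sigma> D] by simp
    thus ?thesis using sp unfolding E_def by (simp add: indicator_def)
  qed
  define Q where "Q D e = (\<forall>i\<in>{1..n}. \<forall>j\<in>{1..n}. i \<noteq> j \<longrightarrow> score S \<epsilon> D e i \<noteq> score S \<epsilon> D e j)"
    for D :: "nat \<Rightarrow> 'z" and e :: "nat \<Rightarrow> real"
  have Qinj: "Q D e \<Longrightarrow> inj_on (score S \<epsilon> D e) {1..n}" for D e
    unfolding Q_def inj_on_def by blast
  have AEQe: "AE e in M2. Q D e" for D
  proof -
    have "AE e in M2. \<forall>i\<in>{1..n}. \<forall>j\<in>{1..n}. i \<noteq> j \<longrightarrow> score S \<epsilon> D e i \<noteq> score S \<epsilon> D e j"
    proof (intro AE_finite_allI finite_atLeastAtMost)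
      fix i j assume i: "i \<in> {1..n}" and j: "j \<in> {1..n}"
      show "AE e in M2. i \<noteq> j \<longrightarrow> score S \<epsilon> D e i \<noteq> score S \<epsilon> D e j"
      proof (cases "i = j")
        case True thus ?thesis by simp
      next
        case False
        have "AE e in M2. e i \<noteq> e j + (S (D j) D - S (D i) D) / \<epsilon>"
          unfolding M2_def using N01 i j False by (intro AE_coord_neq) auto
        thus ?thesis
        proof (rule eventually_mono)
          fix e assume h: "e i \<noteq> e j + (S (D j) D - S (D i) D) / \<epsilon>"
          show "i \<noteq> j \<longrightarrow> score S \<epsilon> D e i \<noteq> score S \<epsilon> D e j"
          proof (intro impI notI)
            assume "score S \<epsilon> D e i = score S \<epsilon> D e j"
            hence "\<epsilon> * e i = \<epsilon> * e j + (S (D j) D - S (D i) D)" unfolding score_def by simp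
            hence "e i = e j + (S (D j) D - S (D i) D) / \<epsilon>" using eps by (simp add: field_simps)
            thus False using h by simp
          qed
        qed
      qed
    qed
    thus ?thesis unfolding Q_def .
  qed
  have AEinj: "AE \<omega> in \<Omega>. inj_on (score S \<epsilon> (fst \<omega>) (fst (snd \<omega>))) {1..n}"
  proof -
    interpret p1: pair_sigma_finite M1 "M2 \<Otimes>\<^sub>M Nm"
      using pM1 pM2N by (simp add: pair_sigma_finite_def prob_space_imp_sigma_finite)
    interpret p2: pair_sigma_finite M2 Nm
      using pM2 pNm by (simp add: pair_sigma_finite_def prob_space_imp_sigma_finite)
    have setQ: "{\<omega> \<in> space \<Omega>. Q (fst \<omega>) (fst (snd \<omega>))} \<in> sets \<Omega>"
      unfolding Q_def
    proof (intro sets.sets_Collect_finite_All finite_atLeastAtMost)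
      fix i j assume i: "i \<in> {1..n}" and j: "j \<in> {1..n}"
      note [measurable] = m_sc[OF i] m_sc[OF j]
      show "{\<omega> \<in> space \<Omega>. i \<noteq> j \<longrightarrow> score S \<epsilon> (fst \<omega>) (fst (snd \<omega>)) i \<noteq> score S \<epsilon> (fst \<omega>) (fst (snd \<omega>)) j} \<in> sets \<Omega>"
        by measurable
    qed
    have "AE \<omega> in \<Omega>. Q (fst \<omega>) (fst (snd \<omega>))"
      unfolding \<Omega>_def
    proof (rule p1.AE_pair_measure)
      show "{x \<in> space (M1 \<Otimes>\<^sub>M (M2 \<Otimes>\<^sub>M Nm)). Q (fst x) (fst (snd x))} \<in> sets (M1 \<Otimes>\<^sub>M (M2 \<Otimes>\<^sub>M Nm))"
        using setQ unfolding \<Omega>_def .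
      show "AE x in M1. AE y in M2 \<Otimes>\<^sub>M Nm. Q (fst (x, y)) (fst (snd (x, y)))"
      proof (rule AE_I2)
        fix D assume D: "D \<in> space M1"
        have ecomp: "(\<lambda>y. fst y k) \<in> borel_measurable (M2 \<Otimes>\<^sub>M Nm)" if k: "k \<in> {1..n}" for k
        proof -
          have "(\<lambda>e. e k) \<in> M2 \<rightarrow>\<^sub>M N01" unfolding M2_def using k by (intro measurable_component_singleton) auto
          moreover have "measurable M2 N01 = borel_measurable M2" by (rule measurable_cong_sets[OF refl N01(2)])
          ultimately have "(\<lambda>e. e k) \<in> borel_measurable M2" by simp
          from measurable_compose[OF measurable_fst[of M2 Nm] this] show ?thesis by simp
        qed
        have setQ2: "{y \<in> space (M2 \<Otimes>\<^sub>M Nm). Q D (fst y)} \<in> sets (M2 \<Otimes>\<^sub>M Nm)"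
          unfolding Q_def
        proof (intro sets.sets_Collect_finite_All finite_atLeastAtMost)
          fix i j assume i: "i \<in> {1..n}" and j: "j \<in> {1..n}"
          note [measurable] = ecomp[OF i] ecomp[OF j]
          show "{y \<in> space (M2 \<Otimes>\<^sub>M Nm). i \<noteq> j \<longrightarrow> score S \<epsilon> D (fst y) i \<noteq> score S \<epsilon> D (fst y) j} \<in> sets (M2 \<Otimes>\<^sub>M Nm)"
            unfolding score_def by measurable
        qed
        have "AE y in M2 \<Otimes>\<^sub>M Nm. Q D (fst y)"
        proof (rule p2.AE_pair_measure[OF setQ2])
          show "AE x in M2. AE y in Nm. Q D (fst (x, y))"
            using AEQe[of D] by eventually_elim simp
        qed
        thus "AE y in M2 \<Otimes>\<^sub>M Nm. Q (fst (D, y)) (fst (snd (D, y)))" by simp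
      qed
    qed
    thus ?thesis by (rule eventually_mono) (rule Qinj)
  qed
  define hh where "hh ps u = (\<Sum>\<pi>\<in>Pm. if p_multi A I L B (G_supnorm A I L \<pi>) ps u < \<alpha> then 1 else 0) / real (card Pm)"
    for ps u
  have cPm0: "real (card Pm) > 0" using finPm by (simp add: card_gt_0_iff)
  have m_pN: "(\<lambda>z. p_multi A I L B t (fst z) (snd z)) \<in> borel_measurable Nm" for t
  proof (rule meas_p)
    show "(\<lambda>z. t) \<in> borel_measurable Nm" by simp
    show "(\<lambda>z. G_supnorm A I L (fst z b)) \<in> borel_measurable Nm" if b: "b \<in> {1..B}" for b
      using measurable_compose[OF measurable_fst[of M3 M4] m_G3[OF b]] unfolding Nm_def by simp
    show "snd \<in> borel_measurable Nm" using sM4[of Nm] measurable_snd[of M3 M4] unfolding Nm_def by simp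
  qed
  have m_hh: "(\<lambda>z. hh (fst z) (snd z)) \<in> borel_measurable Nm"
    unfolding hh_def
  proof (intro borel_measurable_divide borel_measurable_sum borel_measurable_const)
    fix \<pi> :: "nat \<Rightarrow> nat"
    show "(\<lambda>z. if p_multi A I L B (G_supnorm A I L \<pi>) (fst z) (snd z) < \<alpha> then 1 else 0::real) \<in> borel_measurable Nm"
      by (intro measurable_If borel_measurable_const borel_measurable_less m_pN)
  qed
  have bd_hh: "\<bar>hh ps u\<bar> \<le> 1" for ps u
  proof -
    let ?s = "(\<Sum>\<pi>\<in>Pm. if p_multi A I L B (G_supnorm A I L \<pi>) ps u < \<alpha> then 1 else 0::real)"
    have "0 \<le> ?s" by (intro sum_nonneg) auto
    moreover have "?s \<le> real (card Pm) * 1" by (rule sum_bounded_above) auto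
    ultimately show ?thesis using cPm0 unfolding hh_def by (simp add: abs_le_iff divide_le_eq_1)
  qed
  have step4: "measure \<Omega> E = (\<integral>\<omega>. hh (fst (snd (snd \<omega>))) (snd (snd (snd \<omega>))) \<partial>\<Omega>)"
  proof -
    have cPm: "real (card Pm) > 0" using finPm by (simp add: card_gt_0_iff)
    have "measure \<Omega> E = (\<Sum>\<sigma>\<in>Pm. (\<integral>\<omega>. (indicator E (\<Phi> \<sigma> \<omega>) :: real) \<partial>\<Omega>)) / real (card Pm)"
      using intE cPm by (simp add: Pm_def)
    also have "\<dots> = (\<integral>\<omega>. (\<Sum>\<sigma>\<in>Pm. (indicator E (\<Phi> \<sigma> \<omega>) :: real)) / real (card Pm) \<partial>\<Omega>)"
      using int_ind\<Phi> by (simp add: integral_sum Pm_def)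
    also have "\<dots> = (\<integral>\<omega>. hh (fst (snd (snd \<omega>))) (snd (snd (snd \<omega>))) \<partial>\<Omega>)"
    proof (rule integral_cong_AE)
      show "(\<lambda>\<omega>. (\<Sum>\<sigma>\<in>Pm. (indicator E (\<Phi> \<sigma> \<omega>) :: real)) / real (card Pm)) \<in> borel_measurable \<Omega>"
        using m_ind\<Phi> by (intro borel_measurable_divide borel_measurable_sum borel_measurable_const) (auto simp: Pm_def)
      show "(\<lambda>\<omega>. hh (fst (snd (snd \<omega>))) (snd (snd (snd \<omega>)))) \<in> borel_measurable \<Omega>"
        using measurable_compose[OF m_Nm m_hh] by simp
      show "AE \<omega> in \<Omega>. (\<Sum>\<sigma>\<in>Pm. (indicator E (\<Phi> \<sigma> \<omega>) :: real)) / real (card Pm) = hh (fst (snd (snd \<omega>))) (snd (snd (snd \<omega>)))"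
        using AEinj
      proof (rule AE_mp[OF _ AE_I2[OF impI]])
        fix \<omega> assume \<omega>: "\<omega> \<in> space \<Omega>" and inj: "inj_on (score S \<epsilon> (fst \<omega>) (fst (snd \<omega>))) {1..n}"
        have "(\<Sum>\<sigma>\<in>Pm. (indicator E (\<Phi> \<sigma> \<omega>) :: real))
          = (\<Sum>\<sigma>\<in>Pm. if p_multi A I L B (T_multi A I L (score S \<epsilon> (fst \<omega>) (fst (snd \<omega>)) \<circ> \<sigma>)) (fst (snd (snd \<omega>))) (snd (snd (snd \<omega>))) < \<alpha> then 1 else 0)"
          using pt \<omega> by (intro sum.cong refl) (auto simp: Pm_def)
        also have "\<dots> = (\<Sum>\<pi>\<in>Pm. if p_multi A I L B (G_supnorm A I L \<pi>) (fst (snd (snd \<omega>))) (snd (snd (snd \<omega>))) < \<alpha> then 1 else 0)"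
          unfolding Pm_def by (rule perm_sum_eq[OF inj Ifin Apos])
        finally show "(\<Sum>\<sigma>\<in>Pm. (indicator E (\<Phi> \<sigma> \<omega>) :: real)) / real (card Pm) = hh (fst (snd (snd \<omega>))) (snd (snd (snd \<omega>)))"
          unfolding hh_def by simp
      qed
    qed
    finally show ?thesis .
  qed
  have step5: "(\<integral>\<omega>. hh (fst (snd (snd \<omega>))) (snd (snd (snd \<omega>))) \<partial>\<Omega>) = (\<integral>z. hh (fst z) (snd z) \<partial>Nm)"
  proof -
    have g2: "(\<lambda>y. hh (fst (snd y)) (snd (snd y))) \<in> borel_measurable (M2 \<Otimes>\<^sub>M Nm)"
      using measurable_compose[OF measurable_snd[of M2 Nm] m_hh] by simp
    have "(\<integral>\<omega>. hh (fst (snd (snd \<omega>))) (snd (snd (snd \<omega>))) \<partial>\<Omega>) = (\<integral>y. hh (fst (snd y)) (snd (snd y)) \<partial>(M2 \<Otimes>\<^sub>M Nm))"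
      unfolding \<Omega>_def using integral_snd_prob[OF pM1 pM2N g2, of 1] bd_hh by simp
    also have "\<dots> = (\<integral>z. hh (fst z) (snd z) \<partial>Nm)"
      using integral_snd_prob[OF pM2 pNm m_hh, of 1] bd_hh by simp
    finally show ?thesis .
  qed
  have step6: "(\<integral>z. hh (fst z) (snd z) \<partial>Nm) = \<alpha>"
  proof -
    interpret p34: pair_sigma_finite M3 M4
      using pM3 pM4 by (simp add: pair_sigma_finite_def prob_space_imp_sigma_finite)
    interpret M4: prob_space M4 by (rule pM4)
    interpret Nm: prob_space Nm by (rule pNm)
    have chh: "(\<lambda>(x, y). hh x y) = (\<lambda>z. hh (fst z) (snd z))" by auto
    have inthh: "integrable (M3 \<Otimes>\<^sub>M M4) (\<lambda>(x, y). hh x y)"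
      unfolding chh Nm_def[symmetric] by (rule Nm.integrable_const_bound[where B=1]) (use m_hh bd_hh in auto)
    have s1: "(\<integral>z. hh (fst z) (snd z) \<partial>Nm) = (\<integral>ps. (\<integral>u. hh ps u \<partial>M4) \<partial>M3)"
      using p34.integral_fst[OF inthh] unfolding Nm_def chh by simp
    define c where "c = \<alpha> * (real B + 1)"
    define Wt where "Wt ps \<pi> = W c B (G_supnorm A I L \<circ> (ps(0:=\<pi>)))" for ps \<pi>
    have sM4': "measurable M4 Y = measurable borel Y" for Y :: "'q measure"
      by (rule measurable_cong_sets) (simp_all add: M4_def)
    have inner: "(\<integral>u. hh ps u \<partial>M4) = (\<Sum>\<pi>\<in>Pm. Wt ps \<pi>) / real (card Pm)" for ps
    proof -
      have mi: "(\<lambda>u. if p_multi A I L B t ps u < \<alpha> then 1 else 0::real) \<in> borel_measurable M4" for t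
        unfolding sM4' p_multi_def by measurable
      have ii: "integrable M4 (\<lambda>u. if p_multi A I L B t ps u < \<alpha> then 1 else 0::real)" for t
        by (rule M4.integrable_const_bound[where B=1]) (use mi in auto)
      have eachm: "(\<integral>u. (if p_multi A I L B (G_supnorm A I L \<pi>) ps u < \<alpha> then 1 else 0::real) \<partial>M4) = Wt ps \<pi>" for \<pi>
      proof -
        let ?K = "real (card {b\<in>{1..B}. G_supnorm A I L (ps b) > G_supnorm A I L \<pi>})"
        let ?Mr = "1 + real (card {b\<in>{1..B}. G_supnorm A I L (ps b) = G_supnorm A I L \<pi>})"
        have set: "{u. p_multi A I L B (G_supnorm A I L \<pi>) ps u < \<alpha>} = {u. (?K + u * ?Mr) / (real B + 1) < \<alpha>}"
          by (simp add: p_multi_def)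
        have ind: "(\<lambda>u. if p_multi A I L B (G_supnorm A I L \<pi>) ps u < \<alpha> then 1 else 0::real)
            = indicator {u. p_multi A I L B (G_supnorm A I L \<pi>) ps u < \<alpha>}"
          by (auto simp: indicator_def fun_eq_iff)
        have "(\<integral>u. (if p_multi A I L B (G_supnorm A I L \<pi>) ps u < \<alpha> then 1 else 0::real) \<partial>M4)
            = measure M4 {u. p_multi A I L B (G_supnorm A I L \<pi>) ps u < \<alpha>}"
          unfolding ind by (simp add: M4_def)
        also have "\<dots> = phi c ?K ?Mr / ?Mr"
          unfolding set M4_def c_def by (rule measure_unif_p) auto
        also have "\<dots> = Wt ps \<pi>"
        proof -
          have e1: "{b\<in>{1..B}. (G_supnorm A I L \<circ> ps(0:=\<pi>)) b > (G_supnorm A I L \<circ> ps(0:=\<pi>)) 0}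
              = {b\<in>{1..B}. G_supnorm A I L (ps b) > G_supnorm A I L \<pi>}" by auto
          have e2: "{b\<in>{1..B}. (G_supnorm A I L \<circ> ps(0:=\<pi>)) b = (G_supnorm A I L \<circ> ps(0:=\<pi>)) 0}
              = {b\<in>{1..B}. G_supnorm A I L (ps b) = G_supnorm A I L \<pi>}" by auto
          show ?thesis unfolding Wt_def W_def e1 e2 by simp
        qed
        finally show ?thesis .
      qed
      have "(\<integral>u. hh ps u \<partial>M4) = (\<integral>u. (\<Sum>\<pi>\<in>Pm. if p_multi A I L B (G_supnorm A I L \<pi>) ps u < \<alpha> then 1 else 0::real) \<partial>M4) / real (card Pm)"
        unfolding hh_def by simp
      also have "\<dots> = (\<Sum>\<pi>\<in>Pm. (\<integral>u. (if p_multi A I L B (G_supnorm A I L \<pi>) ps u < \<alpha> then 1 else 0::real) \<partial>M4)) / real (card Pm)"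
        using ii by (simp add: integral_sum)
      also have "\<dots> = (\<Sum>\<pi>\<in>Pm. Wt ps \<pi>) / real (card Pm)" by (simp add: eachm)
      finally show ?thesis .
    qed
    let ?Q = "PiE {1..B} (\<lambda>_. Pm)"
    have mint: "(\<lambda>ps. \<integral>u. hh ps u \<partial>M4) \<in> borel_measurable M3"
      using m_hh unfolding Nm_def chh[symmetric] by (rule sigma_finite_measure.borel_measurable_lebesgue_integral[OF prob_space_imp_sigma_finite[OF pM4]])
    have s2: "(\<integral>ps. (\<integral>u. hh ps u \<partial>M4) \<partial>M3) = (\<Sum>ps\<in>?Q. (\<integral>u. hh ps u \<partial>M4)) / real (card ?Q)"
      using mint unfolding M3_def by (intro integral_PiM_pmf_of_set) (use finPm in auto)
    also have "\<dots> = (\<Sum>ps\<in>?Q. \<Sum>\<pi>\<in>Pm. Wt ps \<pi>) / real (card Pm) / real (card ?Q)"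
      by (simp add: inner sum_divide_distrib)
    also have "\<dots> = (\<Sum>x\<in>PiE {0..B} (\<lambda>_. Pm). W c B (G_supnorm A I L \<circ> x)) / real (card Pm) / real (card ?Q)"
      unfolding Wt_def using sum_PiE_insert0[OF finPm(1), of "\<lambda>x. W c B (G_supnorm A I L \<circ> x)" B] by simp
    also have "\<dots> = real (card (PiE {0..B} (\<lambda>_. Pm))) * min (max c 0) (real B + 1) / (real B + 1) / real (card Pm) / real (card ?Q)"
      using sym_sum[OF finPm(1), where B=B and c=c and g="G_supnorm A I L"] by simp
    also have "\<dots> = \<alpha>"
    proof -
      have c0: "0 < c" unfolding c_def using a0 by simp
      have c1: "c < real B + 1" unfolding c_def using mult_strict_right_mono[OF a1, of "real B + 1"] by simp
      have mm: "min (max c 0) (real B + 1) = c" using c0 c1 by simp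
      have cq: "card (PiE {0..B} (\<lambda>_. Pm)) = card Pm ^ (B + 1)" by (simp add: card_PiE)
      have cq2: "card ?Q = card Pm ^ B" by (simp add: card_PiE)
      have gen: "p ^ (B+1) * c / d / p / p ^ B = c / d" if "(0::real) < p" for p d
        using that by (simp add: power_add)
      have "real (card (PiE {0..B} (\<lambda>_. Pm))) * min (max c 0) (real B + 1) / (real B + 1) / real (card Pm) / real (card ?Q)
          = c / (real B + 1)"
        unfolding mm cq cq2 of_nat_power using gen[OF cPm0] by simp
      thus ?thesis unfolding c_def by simp
    qed
    finally show ?thesis using s1 by simp
  qed
  have main: "measure \<Omega> E = \<alpha>" using step4 step5 step6 by simp
  show ?thesis unfolding setE using main Om by simp
qed

end
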